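(* Consider an instance of \textbf{LTSP} in which there is $k\in\mathbb N$ such that $s(f)=k$ and $n(f)=1$ for every file $f\in\mathcal F$. Then $\mathcal B_1=\emptyset$ is optimal, i.e., $v(\emptyset)\le v(\mathcal B_1)$ for every set $\mathcal B_1$ of mini-batches.
   Context: A single-track tape stores a sequence of files $\mathcal F=(f_1,\dots,f_n)$ laid out contiguously from left to right: file $f$ occupies blocks $l(f),\dots,r(f)$, has size $s(f)=r(f)-l(f)+1$, $l(f_1)=1$, $l(f_{i+1})=r(f_i)+1$, and $m=\sum_f s(f)$. The tape moves one block per time step; at time $0$ the head is at position $m$. A file is read when the head traverses it rightwards from $l(f)$ to $r(f)$. $\mathcal R$ is a finite set of requests, all released at time $0$, each associated with a file $f(r)$; $\mathcal R(f)$ is the set of requests for $f$ and $n(f)=|\mathcal R(f)|$. A request's response time is the time at which the head starts a rightward reading traversal of its file (all pending requests of a file are serviced simultaneously). \textbf{LTSP} asks to minimize the sum of response times. A mini-batch is a pair $b=(f,f')$ of files with $l(f)\le l(f')$; $l(b)=l(f)$, $r(b)=r(f')$, $s(b)=r(b)-l(b)+1$, and $\mathcal F(b)$ is the set of files $g$ with $l(b)\le l(g)$ and $r(g)\le r(b)$; it is atomic if $|\mathcal F(b)|=1$. Given a set $\mathcal B_1$ of mini-batches, the associated schedule is: Phase 1, the head moves leftwards from $m$ to position $1$, and whenever it reaches $l(b)$ for some $b\in\mathcal B_1$ it executes $b$ (moves rightwards from $l(b)$ to $r(b)$, reading every file of $\mathcal F(b)$, then returns to $l(b)$) before continuing leftwards,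 mini-batches thus being executed in decreasing order of their left endpoints; Phase 2, the head moves rightwards from position $1$ to $m$, reading every file. $v(\mathcal B_1)$ denotes the total response time of this schedule. *)

theory Defs
  imports Main
begin

text \<open>An LTSP instance with n files f_0,...,f_(n-1) (0-indexed, left to right),
  file sizes s :: nat => nat (s i >= 1) and request counts nr :: nat => nat
  (nr i = n(f_i)). All requests are released at time 0.\<close>

definition lpos :: "(nat \<Rightarrow> nat) \<Rightarrow> nat \<Rightarrow> nat" where
  "lpos s i = 1 + (\<Sum>j<i. s j)"

definition rpos :: "(nat \<Rightarrow> nat) \<Rightarrow> nat \<Rightarrow> nat" where
  "rpos s i = lpos s i + s i - 1"

definition tape_len :: "nat \<Rightarrow> (nat \<Rightarrow> nat) \<Rightarrow> nat" where
  "tape_len n s = (\<Sum>j<n. s j)"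

definition is_minibatch :: "nat \<Rightarrow> (nat \<Rightarrow> nat) \<Rightarrow> nat \<times> nat \<Rightarrow> bool" where
  "is_minibatch n s b \<longleftrightarrow> fst b < n \<and> snd b < n \<and> lpos s (fst b) \<le> lpos s (snd b)"

definition mb_l :: "(nat \<Rightarrow> nat) \<Rightarrow> nat \<times> nat \<Rightarrow> nat" where
  "mb_l s b = lpos s (fst b)"

definition mb_r :: "(nat \<Rightarrow> nat) \<Rightarrow> nat \<times> nat \<Rightarrow> nat" where
  "mb_r s b = rpos s (snd b)"

definition mb_size :: "(nat \<Rightarrow> nat) \<Rightarrow> nat \<times> nat \<Rightarrow> nat" where
  "mb_size s b = mb_r s b - mb_l s b + 1"

definition mb_files :: "nat \<Rightarrow> (nat \<Rightarrow> nat) \<Rightarrow> nat \<times> nat \<Rightarrow> nat set" where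
  "mb_files n s b = {g. g < n \<and> mb_l s b \<le> lpos s g \<and> rpos s g \<le> mb_r s b}"

text \<open>The set B_1 is given as the list bs of its mini-batches in execution order
  (non-increasing left endpoints). Executing b costs 2 s(b) time units
  (s(b) steps rightwards reading blocks l(b)..r(b), s(b) steps back to l(b)).\<close>
definition detour :: "(nat \<Rightarrow> nat) \<Rightarrow> (nat \<times> nat) list \<Rightarrow> nat \<Rightarrow> nat" where
  "detour s bs q = (\<Sum>p<q. 2 * mb_size s (bs ! p))"

definition exec_time :: "nat \<Rightarrow> (nat \<Rightarrow> nat) \<Rightarrow> (nat \<times> nat) list \<Rightarrow> nat \<Rightarrow> nat" where
  "exec_time n s bs q = (tape_len n s - mb_l s (bs ! q)) + detour s bs q"

text \<open>Phase 2 starts at position 1 at this time.\<close>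
definition phase2_time :: "nat \<Rightarrow> (nat \<Rightarrow> nat) \<Rightarrow> (nat \<times> nat) list \<Rightarrow> nat" where
  "phase2_time n s bs = (tape_len n s - 1) + detour s bs (length bs)"

text \<open>Response time of (requests of) file g: first start of a rightwards reading
  traversal of g.\<close>
definition resp_time :: "nat \<Rightarrow> (nat \<Rightarrow> nat) \<Rightarrow> (nat \<times> nat) list \<Rightarrow> nat \<Rightarrow> nat" where
  "resp_time n s bs g = Min ({exec_time n s bs q + (lpos s g - mb_l s (bs ! q)) | q.
        q < length bs \<and> g \<in> mb_files n s (bs ! q)}
      \<union> {phase2_time n s bs + (lpos s g - 1)})"

definition total_resp :: "nat \<Rightarrow> (nat \<Rightarrow> nat) \<Rightarrow> (nat \<Rightarrow> nat) \<Rightarrow> (nat \<times> nat) list \<Rightarrow> nat" where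
  "total_resp n s nr bs = (\<Sum>g<n. nr g * resp_time n s bs g)"

definition valid_schedule :: "nat \<Rightarrow> (nat \<Rightarrow> nat) \<Rightarrow> (nat \<times> nat) list \<Rightarrow> bool" where
  "valid_schedule n s bs \<longleftrightarrow> distinct bs \<and> (\<forall>b\<in>set bs. is_minibatch n s b)
     \<and> sorted_wrt (\<lambda>a b. mb_l s b \<le> mb_l s a) bs"

end

theory Submission
  imports Defs
begin

lemma Min_le_shift:
  fixes t :: nat
  assumes "finite S" "finite S'" "S' \<noteq> {}" "\<forall>x\<in>S'. \<exists>y\<in>S. y \<le> x + t"
  shows "Min S \<le> Min S' + t"
proof -
  have "Min S' \<in> S'" using assms Min_in by blast
  then obtain y where "y \<in> S" "y \<le> Min S' + t" using assms(4) by blast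
  thus ?thesis using Min_le[OF assms(1)] by (meson le_trans)
qed

lemma detour_app:
  assumes "q \<le> length cs"
  shows "detour s (cs @ [b]) q = detour s cs q"
  unfolding detour_def using assms by (intro sum.cong) (auto simp: nth_append)

lemma detour_app_full:
  "detour s (cs @ [b]) (length (cs @ [b])) = detour s cs (length cs) + 2 * mb_size s b"
  using detour_app[of "length cs" cs s b] by (simp add: detour_def)

lemma step:
  assumes k1: "k \<ge> 1" and size_k: "\<And>i. i < n \<Longrightarrow> s i = k"
    and valid: "valid_schedule n s (cs @ [(a,c)])"
  shows "(\<Sum>g<n. resp_time n s cs g) + a * (2 * ((c - a + 1) * k))
       \<le> (\<Sum>g<n. resp_time n s (cs @ [(a,c)]) g) + (c - a + 1) * (2 * a * k)"
proof -
  define bs where "bs = cs @ [(a,c)]"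
  have lp: "lpos s i = 1 + i * k" if "i \<le> n" for i
  proof -
    have "(\<Sum>j<i. s j) = (\<Sum>j<i. k)" using that size_k by (intro sum.cong) auto
    thus ?thesis by (simp add: lpos_def)
  qed
  have tl: "tape_len n s = n * k"
  proof -
    have "(\<Sum>j<n. s j) = (\<Sum>j<n. k)" using size_k by (intro sum.cong) auto
    thus ?thesis by (simp add: tape_len_def)
  qed
  have rp: "rpos s i = i * k + k" if "i < n" for i
    using lp[of i] that size_k[OF that] k1 by (simp add: rpos_def)
  have mb: "x < n \<and> y < n \<and> x \<le> y" if "is_minibatch n s (x,y)" for x y
    using that lp[of x] lp[of y] k1 by (auto simp: is_minibatch_def)
  have mbf: "mb_files n s (x,y) = {g. g < n \<and> x \<le> g \<and> g \<le> y}" if "x < n" "y < n" for x y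
  proof -
    have h: "(mb_l s (x,y) \<le> lpos s g \<and> rpos s g \<le> mb_r s (x,y)) = (x \<le> g \<and> g \<le> y)" if "g < n" for g
      using lp[of x] lp[of g] rp[of g] rp[of y] that \<open>x < n\<close> \<open>y < n\<close> k1 by (simp add: mb_l_def mb_r_def)
    show ?thesis unfolding mb_files_def
    proof (intro Collect_cong)
      fix g show "(g < n \<and> mb_l s (x,y) \<le> lpos s g \<and> rpos s g \<le> mb_r s (x,y)) = (g < n \<and> x \<le> g \<and> g \<le> y)"
        using h[of g] by blast
    qed
  qed
  have msz: "mb_size s (x,y) = (y - x + 1) * k" if xy: "x \<le> y" "y < n" for x y
  proof -
    obtain d where d: "y = x + d" using le_Suc_ex[OF xy(1)] by (elim exE)
    have r0: "mb_r s (x,y) = y*k + k" using rp[OF xy(2)] by (simp only: mb_r_def snd_conv)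
    have "y * k = x*k + d*k" unfolding d by (rule add_mult_distrib)
    hence r: "mb_r s (x,y) = x*k + d*k + k" using r0 by simp
    have l: "mb_l s (x,y) = 1 + x*k" using lp[of x] xy by (simp add: mb_l_def)
    have "(y - x + 1) * k = d*k + k" using d by simp
    thus ?thesis unfolding mb_size_def r l using k1 by simp
  qed
  have vb: "is_minibatch n s (a,c)" using valid by (simp add: valid_schedule_def)
  hence ac: "a < n" "c < n" "a \<le> c" using mb[OF vb] by auto
  have srt: "\<forall>x\<in>set cs. mb_l s (a,c) \<le> mb_l s x" using valid
    by (simp add: valid_schedule_def sorted_wrt_append)
  have vcs: "\<forall>x\<in>set cs. is_minibatch n s x" using valid by (simp add: valid_schedule_def)
  have ph: "phase2_time n s bs = phase2_time n s cs + 2 * ((c - a + 1) * k)"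
    using detour_app_full[of s cs "(a,c)"] msz[OF ac(3) ac(2)]
    by (simp add: phase2_time_def bs_def)
  have ex: "exec_time n s bs q = exec_time n s cs q" if "q < length cs" for q
    using that detour_app[of q cs s "(a,c)"] by (simp add: exec_time_def bs_def nth_append)
  have exl: "exec_time n s bs (length cs) = n * k - (1 + a * k) + detour s cs (length cs)"
    using detour_app[of "length cs" cs s "(a,c)"] lp[of a] ac tl
    by (simp add: exec_time_def bs_def mb_l_def)
  define S where "S bs' g = {exec_time n s bs' q + (lpos s g - mb_l s (bs' ! q)) |q.
        q < length bs' \<and> g \<in> mb_files n s (bs' ! q)}" for bs' g
  have rS: "resp_time n s bs' g = Min (S bs' g \<union> {phase2_time n s bs' + (lpos s g - 1)})" for bs' g
    by (simp add: resp_time_def S_def)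
  have finS: "finite (S bs' g)" for bs' g unfolding S_def by (rule finite_image_set) simp
  have A: "resp_time n s cs g \<le> resp_time n s bs g + (if a \<le> g \<and> g \<le> c then 2 * a * k else 0)"
    if g: "g < n" for g
    unfolding rS
  proof (rule Min_le_shift, simp add: finS, simp add: finS, simp, intro ballI)
    fix x assume "x \<in> S bs g \<union> {phase2_time n s bs + (lpos s g - 1)}"
    then consider "x = phase2_time n s bs + (lpos s g - 1)"
      | q where "q < length bs" "g \<in> mb_files n s (bs ! q)"
        "x = exec_time n s bs q + (lpos s g - mb_l s (bs ! q))"
      unfolding S_def by blast
    thus "\<exists>y\<in>S cs g \<union> {phase2_time n s cs + (lpos s g - 1)}.
            y \<le> x + (if a \<le> g \<and> g \<le> c then 2 * a * k else 0)"
    proof cases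
      case 1 thus ?thesis using ph by auto
    next
      case (2 q)
      show ?thesis
      proof (cases "q < length cs")
        case True
        hence "x \<in> S cs g" using 2 ex[OF True] unfolding S_def
          by (auto simp: bs_def nth_append)
        thus ?thesis by (intro bexI[of _ x]) auto
      next
        case False
        hence q: "q = length cs" using 2 by (simp add: bs_def)
        hence bq: "bs ! q = (a,c)" by (simp add: bs_def)
        hence gin: "a \<le> g \<and> g \<le> c" using 2 mbf[OF ac(1,2)] by simp
        have "a * k \<le> g * k" using gin by simp
        moreover have "a * k + 1 \<le> n * k"
        proof -
          have "Suc a * k \<le> n * k" using ac(1) by (intro mult_le_mono1) simp
          thus ?thesis using k1 by simp
        qed
        moreover have "x = n * k - (1 + a * k) + detour s cs (length cs) + (1 + g * k - (1 + a * k))"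
          using 2(3) q bq exl lp[of g] lp[of a] g ac by (simp add: mb_l_def)
        moreover have "phase2_time n s cs + (lpos s g - 1) = n * k - 1 + detour s cs (length cs) + g * k"
          using tl lp[of g] g by (simp add: phase2_time_def)
        ultimately have "phase2_time n s cs + (lpos s g - 1) \<le> x + 2 * a * k" by linarith
        thus ?thesis using gin by auto
      qed
    qed
  qed
  have Sempty: "S cs g = {}" "S bs g = {}" if "g < a" for g
  proof -
    have no: "g \<notin> mb_files n s (bs ! q)" if "q < length bs" for q
    proof -
      obtain x y where xy: "bs ! q = (x,y)" by fastforce
      have inset: "bs ! q \<in> set bs" using that by simp
      have vall: "\<forall>b\<in>set bs. is_minibatch n s b" using valid unfolding valid_schedule_def bs_def by blast
      have "is_minibatch n s (x,y)" using vall inset unfolding xy by blast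
      hence xyn: "x < n" "y < n" using mb by auto
      have "mb_l s (a,c) \<le> mb_l s (x,y)"
      proof (cases "q < length cs")
        case True thus ?thesis using srt xy nth_mem[OF True] by (auto simp: bs_def nth_append)
      next
        case False thus ?thesis using xy that by (auto simp: bs_def nth_append)
      qed
      hence "a * k \<le> x * k" using lp[of a] lp[of x] ac xyn by (simp add: mb_l_def)
      hence "a \<le> x" using k1 by simp
      thus ?thesis using xy mbf[OF xyn] \<open>g < a\<close> by simp
    qed
    show "S bs g = {}" using no unfolding S_def by blast
    have "g \<notin> mb_files n s (cs ! q)" if "q < length cs" for q
      using no[of q] that by (simp add: bs_def nth_append)
    thus "S cs g = {}" unfolding S_def by blast
  qed
  have B: "resp_time n s bs g = resp_time n s cs g + 2 * ((c - a + 1) * k)" if "g < a" for g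
    unfolding rS using Sempty[OF that] ph by simp
  have per: "resp_time n s cs g + (if g < a then 2 * ((c - a + 1) * k) else 0)
      \<le> resp_time n s bs g + (if a \<le> g \<and> g \<le> c then 2 * a * k else 0)" if "g < n" for g
    using A[OF that] B[of g] by (cases "g < a") auto
  have "(\<Sum>g<n. resp_time n s cs g + (if g < a then 2 * ((c - a + 1) * k) else 0))
      \<le> (\<Sum>g<n. resp_time n s bs g + (if a \<le> g \<and> g \<le> c then 2 * a * k else 0))"
    using per by (intro sum_mono) auto
  moreover have "(\<Sum>g<n. (if g < a then 2 * ((c - a + 1) * k) else 0)) = a * (2 * ((c - a + 1) * k))"
  proof -
    have "(\<Sum>g<n. (if g < a then 2 * ((c - a + 1) * k) else 0)) = (\<Sum>g\<in>{g\<in>{..<n}. g < a}. 2 * ((c - a + 1) * k))"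
      by (rule sum.inter_filter[symmetric]) simp
    also have "{g\<in>{..<n}. g < a} = {..<a}" using ac by auto
    finally show ?thesis by simp
  qed
  moreover have "(\<Sum>g<n. (if a \<le> g \<and> g \<le> c then 2 * a * k else 0)) = (c - a + 1) * (2 * a * k)"
  proof -
    have "(\<Sum>g<n. (if a \<le> g \<and> g \<le> c then 2 * a * k else 0)) = (\<Sum>g\<in>{g\<in>{..<n}. a \<le> g \<and> g \<le> c}. 2 * a * k)"
      by (rule sum.inter_filter[symmetric]) simp
    also have "{g\<in>{..<n}. a \<le> g \<and> g \<le> c} = {a..c}" using ac by auto
    moreover have "Suc c - a = c - a + 1" using ac by simp
    ultimately show ?thesis by simp
  qed
  ultimately show ?thesis unfolding bs_def by (simp add: sum.distrib)
qed

theorem theorem1: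
  fixes n k :: nat and s nr :: "nat \<Rightarrow> nat" and bs :: "(nat \<times> nat) list"
  assumes pos: "\<And>i. i < n \<Longrightarrow> s i \<ge> 1"
    and size_k: "\<And>i. i < n \<Longrightarrow> s i = k"
    and one_req: "\<And>i. i < n \<Longrightarrow> nr i = 1"
    and valid: "valid_schedule n s bs"
  shows "total_resp n s nr [] \<le> total_resp n s nr bs"
proof (cases "n = 0")
  case True thus ?thesis by (simp add: total_resp_def)
next
  case False
  hence k1: "k \<ge> 1" using pos size_k by fastforce
  have tr: "total_resp n s nr xs = (\<Sum>g<n. resp_time n s xs g)" for xs
    unfolding total_resp_def using one_req by (intro sum.cong) auto
  have "valid_schedule n s xs \<Longrightarrow> (\<Sum>g<n. resp_time n s [] g) \<le> (\<Sum>g<n. resp_time n s xs g)" for xs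
  proof (induction xs rule: rev_induct)
    case Nil thus ?case by simp
  next
    case (snoc b cs)
    obtain a c where b: "b = (a,c)" by fastforce
    have "valid_schedule n s cs" using snoc.prems
      by (simp add: valid_schedule_def sorted_wrt_append)
    hence "(\<Sum>g<n. resp_time n s [] g) \<le> (\<Sum>g<n. resp_time n s cs g)" using snoc.IH by blast
    moreover have "(\<Sum>g<n. resp_time n s cs g) \<le> (\<Sum>g<n. resp_time n s (cs @ [b]) g)"
      using step[OF k1 size_k, where cs=cs and a=a and c=c] snoc.prems b by (simp add: algebra_simps)
    ultimately show ?case by linarith
  qed
  thus ?thesis using valid tr by simp
qed

end
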